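(* Let $p_1$ and $p_2$ be probability densities on $\mathbb{R}^n$ and $\omega\in[0,1]$. Define the unnormalized harmonic mean $\mathcal{M}^h_\omega\{p_1,p_2\}(\mathbf{x})=\frac{p_1(\mathbf{x})p_2(\mathbf{x})}{(1-\omega)p_1(\mathbf{x})+\omega p_2(\mathbf{x})}$, its normalization constant $\zeta^h=\int_{\mathbb{R}^n}\mathcal{M}^h_\omega\{p_1,p_2\}(\mathbf{x})\,d\mathbf{x}$ (assumed positive), and the harmonic mean density $\mathbf{M}^h_\omega\{p_1,p_2\}=\mathcal{M}^h_\omega\{p_1,p_2\}/\zeta^h$. Then for every $\mathbf{x}\in\mathbb{R}^n$, \[ \min\{p_1(\mathbf{x}),p_2(\mathbf{x})\}\le \mathbf{M}^h_\omega\{p_1,p_2\}(\mathbf{x}), \] i.e. the harmonic mean density is bounded from below by the pointwise minimum of the component densities.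
   Context: The quotient defining $\mathcal{M}^h_\omega$ is taken to be $0$ at points where its numerator vanishes. *)

theory Defs
  imports "HOL-Analysis.Analysis"
begin

definition prob_density :: "('a::euclidean_space \<Rightarrow> real) \<Rightarrow> bool" where
  "prob_density p \<longleftrightarrow> p \<in> borel_measurable lborel \<and> (\<forall>x. 0 \<le> p x)
     \<and> integrable lborel p \<and> integral\<^sup>L lborel p = 1"

definition harm_mean_unnorm ::
  "real \<Rightarrow> ('a \<Rightarrow> real) \<Rightarrow> ('a \<Rightarrow> real) \<Rightarrow> 'a \<Rightarrow> real" where
  "harm_mean_unnorm \<omega> p1 p2 x =
     (if p1 x * p2 x = 0 then 0 else p1 x * p2 x / ((1 - \<omega>) * p1 x + \<omega> * p2 x))"

definition harm_norm_const ::
  "real \<Rightarrow> ('a::euclidean_space \<Rightarrow> real) \<Rightarrow> ('a \<Rightarrow> real) \<Rightarrow> real" where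
  "harm_norm_const \<omega> p1 p2 = integral\<^sup>L lborel (harm_mean_unnorm \<omega> p1 p2)"

definition harm_mean_density ::
  "real \<Rightarrow> ('a::euclidean_space \<Rightarrow> real) \<Rightarrow> ('a \<Rightarrow> real) \<Rightarrow> 'a \<Rightarrow> real" where
  "harm_mean_density \<omega> p1 p2 x = harm_mean_unnorm \<omega> p1 p2 x / harm_norm_const \<omega> p1 p2"

end

theory Submission
  imports Defs
begin

lemma pt_lower:
  fixes a b w :: real
  assumes "0 \<le> a" "0 \<le> b" "0 \<le> w" "w \<le> 1"
  shows "min a b \<le> (if a * b = 0 then 0 else a * b / ((1 - w) * a + w * b))"
proof (cases "a * b = 0")
  case True thus ?thesis using assms by auto
next
  case False
  hence a: "a > 0" and b: "b > 0" using assms by auto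
  have D: "(1 - w) * a + w * b \<le> max a b"
  proof (cases "a \<le> b")
    case True
    have "(1 - w) * a \<le> (1 - w) * b" using True assms by (intro mult_left_mono) auto
    thus ?thesis using True by (simp add: algebra_simps)
  next
    case False
    have "w * b \<le> w * a" using False assms by (intro mult_left_mono) auto
    thus ?thesis using False by (simp add: algebra_simps)
  qed
  have Dp: "(1 - w) * a + w * b > 0" using a b assms
  proof (cases "w = 0")
    case True thus ?thesis using a by simp
  next
    case False
    hence "w * b > 0" using assms b by simp
    moreover have "(1 - w) * a \<ge> 0" using assms a by simp
    ultimately show ?thesis by linarith
  qed
  have "min a b * ((1 - w) * a + w * b) \<le> min a b * max a b"
    using D a b by (intro mult_left_mono) auto
  also have "\<dots> = a * b" by (cases "a \<le> b") (auto simp: min_def max_def)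
  finally show ?thesis using False Dp by (simp add: pos_le_divide_eq)
qed

lemma pt_upper:
  fixes a b w :: real
  assumes "0 \<le> a" "0 \<le> b" "0 \<le> w" "w \<le> 1"
  shows "(if a * b = 0 then 0 else a * b / ((1 - w) * a + w * b)) \<le> (1 - w) * b + w * a"
proof (cases "a * b = 0")
  case True thus ?thesis using assms by auto
next
  case False
  hence a: "a > 0" and b: "b > 0" using assms by auto
  have Dp: "(1 - w) * a + w * b > 0" using a b assms
  proof (cases "w = 0")
    case True thus ?thesis using a by simp
  next
    case False
    hence "w * b > 0" using assms b by simp
    moreover have "(1 - w) * a \<ge> 0" using assms a by simp
    ultimately show ?thesis by linarith
  qed
  have sq: "0 \<le> w * (1 - w) * (a - b)^2" using assms by simp
  have "a * b \<le> ((1 - w) * b + w * a) * ((1 - w) * a + w * b)"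
    using sq by (simp add: algebra_simps power2_eq_square)
  thus ?thesis using False Dp by (simp add: pos_divide_le_eq)
qed

theorem theorem3:
  fixes p1 p2 :: "real ^ 'n \<Rightarrow> real" and \<omega> :: real
  assumes "prob_density p1" and "prob_density p2"
    and "0 \<le> \<omega>" and "\<omega> \<le> 1"
    and "harm_norm_const \<omega> p1 p2 > 0"
  shows "\<forall>x. min (p1 x) (p2 x) \<le> harm_mean_density \<omega> p1 p2 x"
proof
  fix x
  let ?M = "harm_mean_unnorm \<omega> p1 p2"
  let ?Z = "harm_norm_const \<omega> p1 p2"
  have p1: "integrable lborel p1" "integral\<^sup>L lborel p1 = 1" "\<forall>x. 0 \<le> p1 x"
    using assms(1) unfolding prob_density_def by auto
  have p2: "integrable lborel p2" "integral\<^sup>L lborel p2 = 1" "\<forall>x. 0 \<le> p2 x"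
    using assms(2) unfolding prob_density_def by auto
  have int: "integrable lborel ?M"
    using assms(5) not_integrable_integral_eq unfolding harm_norm_const_def by fastforce
  have "?Z \<le> integral\<^sup>L lborel (\<lambda>x. (1 - \<omega>) * p2 x + \<omega> * p1 x)"
    unfolding harm_norm_const_def
    apply (rule integral_mono[OF int])
    using p1 p2 apply simp
    unfolding harm_mean_unnorm_def using pt_upper p1 p2 assms(3,4) by blast
  also have "\<dots> = 1" using p1 p2 by simp
  finally have Z1: "?Z \<le> 1" .
  have lo: "min (p1 x) (p2 x) \<le> ?M x"
    unfolding harm_mean_unnorm_def using pt_lower p1 p2 assms(3,4) by blast
  have "0 \<le> min (p1 x) (p2 x)" using p1 p2 by simp
  hence M0: "0 \<le> ?M x" using lo by linarith
  have "?M x * ?Z \<le> ?M x * 1" using M0 Z1 by (intro mult_left_mono)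
  hence "?M x \<le> ?M x / ?Z" using assms(5)
    by (simp add: le_divide_eq)
  thus "min (p1 x) (p2 x) \<le> harm_mean_density \<omega> p1 p2 x"
    using lo unfolding harm_mean_density_def by linarith
qed

end
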